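(* Let $0\le\beta<1$ and let $f=h+\overline{g}\in\widetilde{\mathcal{G}}^{0}_{\mathcal{H}}(\beta)$ with $h(z)=z+\sum_{n=2}^\infty a_nz^n$, $g(z)=\sum_{n=2}^\infty b_nz^n$. Then $|a_n|+|b_n|\le 2(1-\beta)$ for all $n\ge2$, and for all $z\in\mathbb{D}$, $$\beta|z|+(1-\beta)\frac{1-|z|}{1+|z|}|z|\le |f(z)|\le \beta|z|+(1-\beta)\frac{1+|z|}{1-|z|}|z|.$$ Both growth inequalities are sharp: for $f(z)=z+\sum_{n=2}^\infty 2(1-\beta)z^n$ (which lies in $\widetilde{\mathcal{G}}^{0}_{\mathcal{H}}(\beta)$), equality holds on the right at $z=r$ and on the left at $z=-r$, $0\le r<1$.
   Context: $\mathbb{D}=\{z\in\mathbb{C}:|z|<1\}$. $\mathcal{H}_0$ denotes the class of harmonic functions $f=h+\overline{g}$ on $\mathbb{D}$, where $h,g$ are analytic in $\mathbb{D}$ of the form $h(z)=z+\sum_{n=2}^\infty a_nz^n$ and $g(z)=\sum_{n=2}^\infty b_nz^n$. For $0\le\beta<1$, $\widetilde{\mathcal{G}}^{0}_{\mathcal{H}}(\beta)$ is the set of $f=h+\overline{g}\in\mathcal{H}_0$ such that $\operatorname{Re}\big(h(z)/z\big)-\beta>|g(z)/z|$ for all $z\in\mathbb{D}$ (with $h(z)/z$ and $g(z)/z$ extended analytically to $z=0$). *)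

theory Defs
  imports "HOL-Analysis.Analysis"
begin

text \<open>The class H_0: f = h + conj g with h, g analytic in the unit disc,
  h(z) = z + sum a_n z^n (n>=2), g(z) = sum b_n z^n (n>=2), i.e.
  h 0 = 0, h'(0) = 1, g 0 = 0, g'(0) = 0.\<close>
definition in_H0 :: "(complex \<Rightarrow> complex) \<Rightarrow> (complex \<Rightarrow> complex) \<Rightarrow> bool" where
  "in_H0 h g \<longleftrightarrow> h holomorphic_on ball 0 1 \<and> g holomorphic_on ball 0 1 \<and>
     h 0 = 0 \<and> deriv h 0 = 1 \<and> g 0 = 0 \<and> deriv g 0 = 0"

text \<open>Analytic extension of h(z)/z to z = 0 (for h 0 = 0 the value at 0 is h'(0)).\<close>
definition div_z :: "(complex \<Rightarrow> complex) \<Rightarrow> complex \<Rightarrow> complex" where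
  "div_z h z = (if z = 0 then deriv h 0 else h z / z)"

definition G_tilde_H0 :: "real \<Rightarrow> (complex \<Rightarrow> complex) \<Rightarrow> (complex \<Rightarrow> complex) \<Rightarrow> bool" where
  "G_tilde_H0 \<beta> h g \<longleftrightarrow> in_H0 h g \<and>
     (\<forall>z\<in>ball 0 1. Re (div_z h z) - \<beta> > cmod (div_z g z))"

definition tcoeff :: "(complex \<Rightarrow> complex) \<Rightarrow> nat \<Rightarrow> complex" where
  "tcoeff h n = (deriv ^^ n) h 0 / of_nat (fact n)"

end

theory Submission
  imports Defs "HOL-Complex_Analysis.Complex_Analysis"
begin

lemma hi_transform:
  fixes c :: complex
  assumes "(f has_integral I) S" "\<And>t. c * f t = g t" "J = c * I"
  shows "(g has_integral J) S"
proof -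
  have "((\<lambda>t. c * f t) has_integral c * I) S" by (rule has_integral_mult_right[OF assms(1)])
  then show ?thesis using assms(2,3) by simp
qed

lemma circ_int:
  assumes "(f has_contour_integral I) (circlepath 0 r)"
  shows "((\<lambda>t. f (of_real r * cis t) * of_real r * \<i> * cis t) has_integral I) {0..2*pi}"
  using assms unfolding circlepath_def
  by (subst (asm) has_contour_integral_part_circlepath_iff) auto

lemma int_B:
  fixes \<phi> :: "complex \<Rightarrow> complex"
  assumes hol: "\<phi> holomorphic_on ball 0 1" and r: "0 < r" "r < 1" and m: "m \<ge> 1"
  shows "((\<lambda>t. \<phi> (of_real r * cis t) * cis (real m * t)) has_integral 0) {0..2*pi}"
proof -
  have hol2: "(\<lambda>u. \<phi> u * u ^ (m - 1)) holomorphic_on ball 0 1"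
    using hol by (intro holomorphic_intros)
  have pi: "path_image (circlepath 0 r) \<subseteq> ball 0 1" using r by (auto simp: path_image_circlepath)
  have "((\<lambda>u. \<phi> u * u ^ (m - 1)) has_contour_integral 0) (circlepath 0 r)"
    by (rule Cauchy_theorem_convex_simple[OF hol2 convex_ball valid_path_circlepath pi]) simp
  from circ_int[OF this] have "((\<lambda>t. \<phi> (of_real r * cis t) * (of_real r * cis t) ^ (m - 1) * of_real r * \<i> * cis t) has_integral 0) {0..2*pi}" .
  then show ?thesis
  proof (rule hi_transform[where c="inverse (of_real r ^ m * \<i>)"])
    fix t
    have e: "(of_real r * cis t) ^ (m - 1) * of_real r * cis t = of_real r ^ m * cis (real m * t)"
    proof -
      have "(of_real r * cis t) ^ (m - 1) * (of_real r * cis t) = (of_real r * cis t) ^ m"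
        using m by (metis One_nat_def Suc_le_D diff_Suc_1 power_Suc2)
      then have "(of_real r * cis t) ^ (m - 1) * of_real r * cis t = (of_real r * cis t) ^ m"
        by (simp only: mult.assoc)
      also have "\<dots> = of_real r ^ m * cis t ^ m" by (rule power_mult_distrib)
      also have "cis t ^ m = cis (real m * t)" by (rule Complex.DeMoivre)
      finally show ?thesis .
    qed
    show "inverse (of_real r ^ m * \<i>) * (\<phi> (of_real r * cis t) * (of_real r * cis t) ^ (m - 1) * of_real r * \<i> * cis t)
     = \<phi> (of_real r * cis t) * cis (real m * t)"
    proof -
      have "inverse (of_real r ^ m * \<i>) * (\<phi> (of_real r * cis t) * (of_real r * cis t) ^ (m - 1) * of_real r * \<i> * cis t)
        = inverse (of_real r ^ m * \<i>) * (\<phi> (of_real r * cis t) * ((of_real r * cis t) ^ (m - 1) * of_real r * cis t) * \<i>)"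
        by (simp add: ac_simps)
      also have "\<dots> = \<phi> (of_real r * cis t) * cis (real m * t)"
        unfolding e using r by (simp add: field_simps)
      finally show ?thesis .
    qed
  qed simp
qed

lemma int_A:
  fixes \<phi> :: "complex \<Rightarrow> complex" and c :: complex
  assumes r: "0 < r" and I: "((\<lambda>u. \<phi> u / u ^ Suc m) has_contour_integral (2 * pi * \<i> * c)) (circlepath 0 r)"
  shows "((\<lambda>t. \<phi> (of_real r * cis t) * cis (- (real m * t))) has_integral (2 * pi * c * of_real r ^ m)) {0..2*pi}"
  using circ_int[OF I]
proof (rule hi_transform[where c="of_real r ^ m / \<i>"])
  fix t
  have e: "(of_real r * cis t) ^ Suc m = of_real r ^ Suc m * cis (real (Suc m) * t)"
    by (simp only: power_mult_distrib Complex.DeMoivre)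
  have c: "cis t / cis (real (Suc m) * t) = cis (- (real m * t))"
    by (simp add: cis_divide algebra_simps)
  have "of_real r ^ m / \<i> * (\<phi> (of_real r * cis t) / (of_real r * cis t) ^ Suc m * of_real r * \<i> * cis t)
     = \<phi> (of_real r * cis t) * (cis t / cis (real (Suc m) * t))"
    unfolding e using r by (simp add: field_simps)
  then show "of_real r ^ m / \<i> * (\<phi> (of_real r * cis t) / (of_real r * cis t) ^ Suc m * of_real r * \<i> * cis t)
     = \<phi> (of_real r * cis t) * cis (- (real m * t))" unfolding c .
next
  show "2 * pi * c * of_real r ^ m = of_real r ^ m / \<i> * (2 * pi * \<i> * c)"
    by (simp add: field_simps)
qed

lemma int_C:
  fixes \<phi> :: "complex \<Rightarrow> complex"
  assumes hol: "\<phi> holomorphic_on ball 0 1" and r: "0 < r" "r < 1"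
  shows "((\<lambda>t. \<phi> (of_real r * cis t)) has_integral (2 * pi * \<phi> 0)) {0..2*pi}"
proof -
  have cont: "continuous_on (cball 0 r) \<phi>"
  proof -
    have "cball 0 r \<subseteq> ball (0::complex) 1" using r by auto
    then have "\<phi> holomorphic_on cball 0 r" by (rule holomorphic_on_subset[OF hol])
    then show ?thesis by (rule holomorphic_on_imp_continuous_on)
  qed
  have hol': "\<phi> holomorphic_on ball 0 r"
  proof -
    have "ball 0 r \<subseteq> ball (0::complex) 1" using r by auto
    then show ?thesis by (rule holomorphic_on_subset[OF hol])
  qed
  have "((\<lambda>u. \<phi> u / (u - 0) ^ Suc 0) has_contour_integral ((2 * pi * \<i>) / (fact 0) * (deriv ^^ 0) \<phi> 0)) (circlepath 0 r)"
    by (rule Cauchy_has_contour_integral_higher_derivative_circlepath[OF cont hol']) (use r in simp)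
  then have "((\<lambda>u. \<phi> u / u ^ Suc 0) has_contour_integral (2 * pi * \<i> * \<phi> 0)) (circlepath 0 r)" by simp
  from int_A[OF r(1) this] show ?thesis by simp
qed

lemma coeff_est:
  fixes \<phi> :: "complex \<Rightarrow> complex" and c :: complex and \<beta> :: real
  assumes hol: "\<phi> holomorphic_on ball 0 1" and \<phi>0: "\<phi> 0 = 1"
    and re: "\<And>z. z \<in> ball 0 1 \<Longrightarrow> \<beta> < Re (\<phi> z)"
    and m: "m \<ge> 1" and r: "0 < r" "r < 1"
    and I: "((\<lambda>u. \<phi> u / u ^ Suc m) has_contour_integral (2 * pi * \<i> * c)) (circlepath 0 r)"
  shows "cmod c * r ^ m \<le> 2 * (1 - \<beta>)"
proof -
  define F where "F t = \<phi> (of_real r * cis t)" for t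
  define E where "E t = cis (- (real m * t))" for t
  have A: "((\<lambda>t. F t * E t) has_integral (2 * pi * c * of_real r ^ m)) {0..2*pi}"
    using int_A[OF r(1) I] unfolding F_def E_def .
  have B: "((\<lambda>t. F t * cis (real m * t)) has_integral 0) {0..2*pi}"
    using int_B[OF hol r m] unfolding F_def .
  have hol1: "(\<lambda>_. 1::complex) holomorphic_on ball 0 1" by simp
  have B1: "((\<lambda>t. cis (real m * t)) has_integral 0) {0..2*pi}"
    using int_B[OF hol1 r m] by simp
  have C: "(F has_integral (2 * complex_of_real pi)) {0..2*pi}"
    using int_C[OF hol r] \<phi>0 unfolding F_def by simp
  have C1: "((\<lambda>t. 1::complex) has_integral (2 * complex_of_real pi)) {0..2*pi}"
    using int_C[OF hol1 r] by simp
  have Bc: "((\<lambda>t. cnj (F t) * E t) has_integral 0) {0..2*pi}"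
  proof -
    have "((cnj \<circ> (\<lambda>t. F t * cis (real m * t))) has_integral cnj 0) {0..2*pi}"
      using B by (subst has_integral_cnj)
    moreover have "(cnj \<circ> (\<lambda>t. F t * cis (real m * t))) = (\<lambda>t. cnj (F t) * E t)"
      by (auto simp: E_def cis_cnj)
    ultimately show ?thesis by simp
  qed
  have B1c: "(E has_integral 0) {0..2*pi}"
  proof -
    have "((cnj \<circ> (\<lambda>t. cis (real m * t))) has_integral cnj 0) {0..2*pi}"
      using B1 by (subst has_integral_cnj)
    moreover have "(cnj \<circ> (\<lambda>t. cis (real m * t))) = E"
      by (auto simp: E_def cis_cnj)
    ultimately show ?thesis by simp
  qed
  define G where "G t = F t * E t + cnj (F t) * E t - (2 * of_real \<beta>) * E t" for t
  have GI: "(G has_integral (2 * pi * c * of_real r ^ m)) {0..2*pi}"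
  proof -
    have "((\<lambda>t. F t * E t + cnj (F t) * E t - (2 * of_real \<beta>) * E t) has_integral
       (2 * pi * c * of_real r ^ m + 0 - (2 * of_real \<beta>) * 0)) {0..2*pi}"
      by (intro has_integral_diff has_integral_add A Bc has_integral_mult_right B1c)
    then show ?thesis unfolding G_def by simp
  qed
  define K where "K t = 2 * (F t - of_real \<beta>)" for t
  have C2: "((\<lambda>t. of_real \<beta> :: complex) has_integral (of_real \<beta> * (2 * complex_of_real pi))) {0..2*pi}"
    using has_integral_mult_right[OF C1, of "of_real \<beta>"] by simp
  have KI: "(K has_integral (2 * (2 * complex_of_real pi - of_real \<beta> * (2 * complex_of_real pi)))) {0..2*pi}"
    unfolding K_def
    by (intro has_integral_mult_right has_integral_diff C C2)
  have bound: "norm (G t) \<le> K t \<bullet> 1" if "t \<in> {0..2*pi}" for t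
  proof -
    have inb: "of_real r * cis t \<in> ball 0 1" using r by (simp add: norm_mult)
    have reF: "\<beta> < Re (F t)" using re[OF inb] unfolding F_def .
    have ac: "F t + cnj (F t) = of_real (2 * Re (F t))" by (rule complex_add_cnj)
    have "G t = (F t + cnj (F t) - 2 * of_real \<beta>) * E t"
      unfolding G_def by (simp add: algebra_simps)
    also have "\<dots> = of_real (2 * Re (F t) - 2 * \<beta>) * E t" unfolding ac by simp
    finally have "G t = of_real (2 * Re (F t) - 2 * \<beta>) * E t" .
    then have "norm (G t) = norm (of_real (2 * Re (F t) - 2 * \<beta>) :: complex) * norm (E t)"
      by (simp only: norm_mult)
    then have "norm (G t) = \<bar>2 * Re (F t) - 2 * \<beta>\<bar>"
      unfolding norm_of_real by (simp add: E_def)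
    also have "\<dots> = K t \<bullet> 1" using reF by (simp add: K_def)
    finally show ?thesis by simp
  qed
  have "norm (2 * pi * c * of_real r ^ m) \<le> (2 * (2 * complex_of_real pi - of_real \<beta> * (2 * complex_of_real pi))) \<bullet> (1::complex)"
    by (rule has_integral_norm_bound_integral_component[OF GI KI bound])
  then have "2 * pi * (cmod c * r ^ m) \<le> 2 * pi * (2 * (1 - \<beta>))"
    using r by (simp add: norm_mult norm_power algebra_simps)
  then show ?thesis by simp
qed

lemma limit_le:
  fixes A B :: real
  assumes "\<And>r. 0 < r \<Longrightarrow> r < 1 \<Longrightarrow> A * r ^ m \<le> B"
  shows "A \<le> B"
proof -
  have lim: "((\<lambda>r. A * r ^ m) \<longlongrightarrow> A * 1 ^ m) (at_left (1::real))"
    by (intro tendsto_intros)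
  have ev: "eventually (\<lambda>r. A * r ^ m \<le> B) (at_left (1::real))"
  proof -
    have "eventually (\<lambda>r. r \<in> {0<..<1}) (at_left (1::real))"
      by (rule eventually_at_left_real) simp
    then show ?thesis by eventually_elim (use assms in auto)
  qed
  have "A * 1 ^ m \<le> B"
    by (rule tendsto_upperbound[OF lim ev]) (simp add: trivial_limit_at_left_real)
  then show ?thesis by simp
qed

lemma norm_less_re:
  fixes q :: complex
  assumes "0 < Re q"
  shows "cmod (q - 1) < cmod (q + 1)"
proof -
  have "cmod (q - 1) ^ 2 = (Re q - 1) ^ 2 + (Im q) ^ 2" by (simp add: cmod_power2)
  moreover have "cmod (q + 1) ^ 2 = (Re q + 1) ^ 2 + (Im q) ^ 2" by (simp add: cmod_power2)
  ultimately have "cmod (q - 1) ^ 2 < cmod (q + 1) ^ 2" using assms by (simp add: power2_eq_square algebra_simps)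
  then show ?thesis by (rule power2_less_imp_less) simp
qed

lemma carath_pointwise:
  fixes w :: complex and \<rho> :: real
  assumes w: "cmod w \<le> \<rho>" and \<rho>: "\<rho> < 1"
  shows "cmod ((1 + w) / (1 - w)) \<le> (1 + \<rho>) / (1 - \<rho>)"
    and "(1 - \<rho>) / (1 + \<rho>) \<le> Re ((1 + w) / (1 - w))"
proof -
  define s where "s = cmod w"
  have s0: "0 \<le> s" and s\<rho>: "s \<le> \<rho>" and s1: "s < 1" using w \<rho> by (auto simp: s_def)
  have n1: "cmod (1 + w) \<le> 1 + s" unfolding s_def using norm_triangle_ineq[of 1 w] by simp
  have n2: "1 - s \<le> cmod (1 - w)" unfolding s_def using norm_triangle_ineq2[of 1 w] by simp
  have "cmod ((1 + w) / (1 - w)) = cmod (1 + w) / cmod (1 - w)" by (simp add: norm_divide)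
  also have "\<dots> \<le> (1 + s) / (1 - s)"
    using n1 n2 s1 s0 by (intro frac_le) auto
  also have "\<dots> \<le> (1 + \<rho>) / (1 - \<rho>)"
    using s\<rho> s1 \<rho> s0 by (simp add: divide_simps) (simp add: algebra_simps)
  finally show "cmod ((1 + w) / (1 - w)) \<le> (1 + \<rho>) / (1 - \<rho>)" .
  define x where "x = Re w"
  define y where "y = Im w"
  have sq: "s ^ 2 = x ^ 2 + y ^ 2" unfolding s_def x_def y_def by (simp add: cmod_power2)
  have xs: "- x \<le> s" unfolding s_def x_def using abs_Re_le_cmod[of w] by linarith
  have D: "(1 - x) ^ 2 + y ^ 2 \<le> (1 + s) ^ 2" using sq xs s0 by (simp add: power2_eq_square algebra_simps)
  have Dpos: "0 < (1 - x) ^ 2 + y ^ 2"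
  proof -
    have "x < 1" using abs_Re_le_cmod[of w] s1 unfolding x_def s_def by linarith
    then show ?thesis by (simp add: add_pos_nonneg)
  qed
  have "Re ((1 + w) / (1 - w)) = ((1 + x) * (1 - x) + y * (- y)) / ((1 - x) ^ 2 + y ^ 2)"
    unfolding x_def y_def by (simp add: Re_divide power2_eq_square)
  also have "\<dots> = (1 - s ^ 2) / ((1 - x) ^ 2 + y ^ 2)" using sq by (simp add: algebra_simps power2_eq_square)
  also have "\<dots> \<ge> (1 - s ^ 2) / (1 + s) ^ 2"
    using D Dpos s1 s0 by (intro divide_left_mono) (auto simp: power2_eq_square mult_le_one intro: mult_pos_pos)
  finally have "(1 - s ^ 2) / (1 + s) ^ 2 \<le> Re ((1 + w) / (1 - w))" .
  moreover have "(1 - s ^ 2) / (1 + s) ^ 2 = (1 - s) / (1 + s)" using s0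
    by (simp add: power2_eq_square divide_simps) (simp add: algebra_simps)
  moreover have "(1 - \<rho>) / (1 + \<rho>) \<le> (1 - s) / (1 + s)"
    using s\<rho> s0 \<rho> by (simp add: divide_simps) (simp add: algebra_simps)
  ultimately show "(1 - \<rho>) / (1 + \<rho>) \<le> Re ((1 + w) / (1 - w))" by linarith
qed

lemma growth:
  fixes \<phi> :: "complex \<Rightarrow> complex" and \<beta> :: real
  assumes hol: "\<phi> holomorphic_on ball 0 1" and \<phi>0: "\<phi> 0 = 1"
    and re: "\<And>z. z \<in> ball 0 1 \<Longrightarrow> \<beta> < Re (\<phi> z)"
    and \<beta>: "0 \<le> \<beta>" "\<beta> < 1" and z: "z \<in> ball 0 1"
  shows "cmod (\<phi> z) \<le> \<beta> + (1 - \<beta>) * ((1 + cmod z) / (1 - cmod z))"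
    and "\<beta> + (1 - \<beta>) * ((1 - cmod z) / (1 + cmod z)) \<le> Re (\<phi> z)"
proof -
  define p where "p w = (\<phi> w - of_real \<beta>) / of_real (1 - \<beta>)" for w
  define \<omega> where "\<omega> w = (p w - 1) / (p w + 1)" for w
  have b1: "(of_real (1 - \<beta>) :: complex) \<noteq> 0" using \<beta> by simp
  have rep: "0 < Re (p w)" if "w \<in> ball 0 1" for w
    using re[OF that] \<beta> unfolding p_def by (simp add: Re_divide_of_real)
  have nz: "p w + 1 \<noteq> 0" if "w \<in> ball 0 1" for w
  proof -
    have "0 < Re (p w + 1)" using rep[OF that] by simp
    then show ?thesis by (metis zero_complex.simps(1) less_irrefl)
  qed
  have holp: "p holomorphic_on ball 0 1" unfolding p_def using hol b1 by (intro holomorphic_intros) auto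
  have hol\<omega>: "\<omega> holomorphic_on ball 0 1" unfolding \<omega>_def using holp nz by (intro holomorphic_intros) auto
  have p0: "p 0 = 1" unfolding p_def \<phi>0 by (metis b1 divide_self of_real_1 of_real_diff)
  have \<omega>0: "\<omega> 0 = 0" unfolding \<omega>_def p0 by simp
  have \<omega>1: "norm (\<omega> w) < 1" if "norm w < 1" for w
  proof -
    have wb: "w \<in> ball 0 1" using that by simp
    have "cmod (p w - 1) < cmod (p w + 1)" by (rule norm_less_re[OF rep[OF wb]])
    then show ?thesis unfolding \<omega>_def using nz[OF wb] by (simp add: norm_divide divide_less_eq)
  qed
  have zn: "norm z < 1" using z by simp
  have sch: "norm (\<omega> z) \<le> norm z" by (rule Schwarz_Lemma(1)[OF hol\<omega> \<omega>0 \<omega>1 zn])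
  have ne1: "\<omega> z \<noteq> 1" using \<omega>1[OF zn] by auto
  have pz: "p z = (1 + \<omega> z) / (1 - \<omega> z)"
  proof -
    have "\<omega> z * (p z + 1) = p z - 1" unfolding \<omega>_def using nz[OF z] by simp
    then have "p z * (1 - \<omega> z) = 1 + \<omega> z" by (simp add: algebra_simps)
    then show ?thesis using ne1 by (simp add: field_simps)
  qed
  have \<phi>z: "\<phi> z = of_real \<beta> + of_real (1 - \<beta>) * p z" unfolding p_def using b1 by simp
  have c1: "cmod (p z) \<le> (1 + cmod z) / (1 - cmod z)"
    unfolding pz by (rule carath_pointwise(1)[OF sch zn])
  have c2: "(1 - cmod z) / (1 + cmod z) \<le> Re (p z)"
    unfolding pz by (rule carath_pointwise(2)[OF sch zn])
  have "cmod (\<phi> z) \<le> cmod (of_real \<beta> :: complex) + cmod (of_real (1 - \<beta>) * p z)"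
    unfolding \<phi>z by (rule norm_triangle_ineq)
  also have "\<dots> = \<beta> + (1 - \<beta>) * cmod (p z)" using \<beta> by (simp only: norm_mult norm_of_real abs_of_nonneg)
  also have "\<dots> \<le> \<beta> + (1 - \<beta>) * ((1 + cmod z) / (1 - cmod z))"
    using mult_left_mono[OF c1, of "1 - \<beta>"] \<beta> by simp
  finally show "cmod (\<phi> z) \<le> \<beta> + (1 - \<beta>) * ((1 + cmod z) / (1 - cmod z))" .
  have "Re (\<phi> z) = \<beta> + (1 - \<beta>) * Re (p z)" unfolding \<phi>z by simp
  then show "\<beta> + (1 - \<beta>) * ((1 - cmod z) / (1 + cmod z)) \<le> Re (\<phi> z)"
    using mult_left_mono[OF c2, of "1 - \<beta>"] \<beta> by simp
qed

lemma sub_disc: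
  fixes f :: "complex \<Rightarrow> complex"
  assumes hol: "f holomorphic_on ball 0 1" and r: "0 < r" "r < 1"
  shows "continuous_on (cball 0 r) f" "f holomorphic_on ball 0 r"
proof -
  have "cball 0 r \<subseteq> ball (0::complex) 1" using r by auto
  then have "f holomorphic_on cball 0 r" by (rule holomorphic_on_subset[OF hol])
  then show "continuous_on (cball 0 r) f" by (rule holomorphic_on_imp_continuous_on)
  have "ball 0 r \<subseteq> ball (0::complex) 1" using r by auto
  then show "f holomorphic_on ball 0 r" by (rule holomorphic_on_subset[OF hol])
qed

lemma div_z_hol:
  assumes hol: "h holomorphic_on ball 0 1" and h0: "h 0 = 0"
  shows "div_z h holomorphic_on ball 0 1"
proof -
  have "(\<lambda>z. if z = 0 then deriv h 0 else (h z - h 0) / (z - 0)) holomorphic_on ball 0 1"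
    by (rule pole_lemma[OF hol]) simp
  moreover have "(\<lambda>z. if z = 0 then deriv h 0 else (h z - h 0) / (z - 0)) = div_z h"
    using h0 by (auto simp: div_z_def)
  ultimately show ?thesis by simp
qed

lemma div_z_mult: "z \<noteq> 0 \<Longrightarrow> h z = z * div_z h z"
  by (simp add: div_z_def)

lemma align_plus:
  fixes a b :: complex
  shows "\<exists>e. cmod e = 1 \<and> cmod (a + e * b) = cmod a + cmod b"
proof (cases "a = 0 \<or> b = 0")
  case True
  then show ?thesis by (intro exI[of _ 1]) auto
next
  case False
  define e where "e = (a / of_real (cmod a)) * (of_real (cmod b) / b)"
  have "cmod e = 1" using False by (simp add: e_def norm_mult norm_divide)
  moreover have eq: "a + e * b = a * of_real (1 + cmod b / cmod a)"
    using False by (simp add: e_def field_simps)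
  have "cmod (a * of_real (1 + cmod b / cmod a)) = cmod a * (1 + cmod b / cmod a)"
    by (simp only: norm_mult norm_of_real) (simp add: abs_of_nonneg)
  then have "cmod (a + e * b) = cmod a * (1 + cmod b / cmod a)" unfolding eq .
  then have "cmod (a + e * b) = cmod a + cmod b" using False by (simp add: field_simps)
  ultimately show ?thesis by blast
qed

lemma align_minus:
  fixes b :: complex
  shows "\<exists>e. cmod e \<le> 1 \<and> Re (e * b) = - cmod b"
proof (cases "b = 0")
  case True
  then show ?thesis by (intro exI[of _ 0]) auto
next
  case False
  define e where "e = - cnj b / of_real (cmod b)"
  have "cmod e = 1" using False by (simp add: e_def norm_divide)
  moreover have "e * b = - of_real (cmod b)"
  proof -
    have "cnj b * b = of_real ((cmod b)^2)" using complex_norm_square[of b] by (simp add: mult.commute)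
    then show ?thesis using False by (simp add: e_def field_simps power2_eq_square)
  qed
  then have "Re (e * b) = - cmod b" by simp
  ultimately show ?thesis by (intro exI[of _ e]) auto
qed

lemma class_phi:
  assumes G: "G_tilde_H0 \<beta> h g" and e: "cmod e \<le> 1"
  shows "(\<lambda>w. div_z h w + e * div_z g w) holomorphic_on ball 0 1"
    and "div_z h 0 + e * div_z g 0 = 1"
    and "\<And>w. w \<in> ball 0 1 \<Longrightarrow> \<beta> < Re (div_z h w + e * div_z g w)"
proof -
  have H: "h holomorphic_on ball 0 1" "g holomorphic_on ball 0 1" "h 0 = 0" "deriv h 0 = 1" "g 0 = 0" "deriv g 0 = 0"
    and R: "\<And>z. z\<in>ball 0 1 \<Longrightarrow> Re (div_z h z) - \<beta> > cmod (div_z g z)"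
    using G unfolding G_tilde_H0_def in_H0_def by auto
  show "(\<lambda>w. div_z h w + e * div_z g w) holomorphic_on ball 0 1"
    using div_z_hol[OF H(1,3)] div_z_hol[OF H(2,5)] by (intro holomorphic_intros)
  show "div_z h 0 + e * div_z g 0 = 1" using H by (simp add: div_z_def)
  fix w :: complex assume w: "w \<in> ball 0 1"
  have "- cmod (div_z g w) \<le> Re (e * div_z g w)"
  proof -
    have "\<bar>Re (e * div_z g w)\<bar> \<le> cmod (e * div_z g w)" by (rule abs_Re_le_cmod)
    also have "\<dots> \<le> cmod (div_z g w)" using e by (simp add: norm_mult mult_left_le_one_le)
    finally show ?thesis by linarith
  qed
  then show "\<beta> < Re (div_z h w + e * div_z g w)" using R[OF w] by simp
qed

lemma contour_coeff:
  assumes hol: "h holomorphic_on ball 0 1" and h0: "h 0 = 0" and r: "0 < r" "r < 1"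
  shows "((\<lambda>u. div_z h u / u ^ n) has_contour_integral (2 * pi * \<i> * tcoeff h n)) (circlepath 0 r)"
proof -
  have "((\<lambda>u. h u / (u - 0) ^ Suc n) has_contour_integral ((2 * pi * \<i>) / (fact n) * (deriv ^^ n) h 0)) (circlepath 0 r)"
    by (rule Cauchy_has_contour_integral_higher_derivative_circlepath[OF sub_disc[OF hol r]]) (use r in simp)
  then have "((\<lambda>u. h u / u ^ Suc n) has_contour_integral (2 * pi * \<i> * tcoeff h n)) (circlepath 0 r)"
    by (simp add: tcoeff_def)
  then show ?thesis
  proof (rule has_contour_integral_eq)
    fix u assume "u \<in> path_image (circlepath 0 r)"
    then have "u \<noteq> 0" using r by (auto simp: path_image_circlepath)
    then show "h u / u ^ Suc n = div_z h u / u ^ n" by (simp add: div_z_def)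
  qed
qed

lemma part_coeff:
  assumes G: "G_tilde_H0 \<beta> h g" and n: "n \<ge> 2"
  shows "cmod (tcoeff h n) + cmod (tcoeff g n) \<le> 2 * (1 - \<beta>)"
proof -
  have H: "h holomorphic_on ball 0 1" "g holomorphic_on ball 0 1" "h 0 = 0" "g 0 = 0"
    using G unfolding G_tilde_H0_def in_H0_def by auto
  obtain e where e: "cmod e = 1" "cmod (tcoeff h n + e * tcoeff g n) = cmod (tcoeff h n) + cmod (tcoeff g n)"
    using align_plus by blast
  define \<phi> where "\<phi> w = div_z h w + e * div_z g w" for w
  have e1: "cmod e \<le> 1" using e by simp
  have P: "\<phi> holomorphic_on ball 0 1" "\<phi> 0 = 1" "\<And>w. w \<in> ball 0 1 \<Longrightarrow> \<beta> < Re (\<phi> w)"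
    using class_phi[OF G e1] unfolding \<phi>_def[abs_def] by auto
  have m: "n - 1 \<ge> 1" using n by simp
  have "cmod (tcoeff h n + e * tcoeff g n) * r ^ (n - 1) \<le> 2 * (1 - \<beta>)" if r: "0 < r" "r < 1" for r
  proof -
    have I: "((\<lambda>u. div_z h u / u ^ n + e * (div_z g u / u ^ n)) has_contour_integral
        (2 * pi * \<i> * tcoeff h n + e * (2 * pi * \<i> * tcoeff g n))) (circlepath 0 r)"
      by (intro has_contour_integral_add has_contour_integral_lmul contour_coeff H r)
    have eqf: "(\<lambda>u. div_z h u / u ^ n + e * (div_z g u / u ^ n)) = (\<lambda>u. \<phi> u / u ^ Suc (n - 1))"
      using n by (intro ext) (simp add: \<phi>_def add_divide_distrib)
    have eqv: "2 * pi * \<i> * tcoeff h n + e * (2 * pi * \<i> * tcoeff g n) = 2 * pi * \<i> * (tcoeff h n + e * tcoeff g n)"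
      by (simp add: algebra_simps)
    have "((\<lambda>u. \<phi> u / u ^ Suc (n - 1)) has_contour_integral (2 * pi * \<i> * (tcoeff h n + e * tcoeff g n))) (circlepath 0 r)"
      using I unfolding eqf eqv .
    from coeff_est[OF P m r this] show ?thesis .
  qed
  then have "cmod (tcoeff h n + e * tcoeff g n) \<le> 2 * (1 - \<beta>)" by (rule limit_le)
  then show ?thesis using e(2) by simp
qed

lemma part_growth:
  assumes G: "G_tilde_H0 \<beta> h g" and \<beta>: "0 \<le> \<beta>" "\<beta> < 1" and z: "z \<in> ball 0 1"
  shows "\<beta> * cmod z + (1 - \<beta>) * ((1 - cmod z) / (1 + cmod z)) * cmod z \<le> cmod (h z + cnj (g z))
       \<and> cmod (h z + cnj (g z)) \<le> \<beta> * cmod z + (1 - \<beta>) * ((1 + cmod z) / (1 - cmod z)) * cmod z"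
proof (cases "z = 0")
  case True
  have "h 0 = 0" "g 0 = 0" using G unfolding G_tilde_H0_def in_H0_def by auto
  then show ?thesis using True by simp
next
  case False
  have hz: "h z = z * div_z h z" and gz: "g z = z * div_z g z" using div_z_mult[OF False] by blast+
  have nz: "0 \<le> cmod z" by simp
  have upper: "cmod (h z + cnj (g z)) \<le> \<beta> * cmod z + (1 - \<beta>) * ((1 + cmod z) / (1 - cmod z)) * cmod z"
  proof -
    obtain e where e: "cmod e = 1" "cmod (div_z h z + e * div_z g z) = cmod (div_z h z) + cmod (div_z g z)"
      using align_plus by blast
    have e1: "cmod e \<le> 1" using e by simp
    note P = class_phi[OF G e1]
    have gr: "cmod (div_z h z + e * div_z g z) \<le> \<beta> + (1 - \<beta>) * ((1 + cmod z) / (1 - cmod z))"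
      by (rule growth(1)[OF P(1,2) P(3) \<beta> z])
    have "cmod (h z + cnj (g z)) \<le> cmod (h z) + cmod (cnj (g z))" by (rule norm_triangle_ineq)
    also have "\<dots> = cmod z * (cmod (div_z h z) + cmod (div_z g z))"
      unfolding hz gz by (simp only: norm_mult complex_mod_cnj distrib_left)
    also have "\<dots> = cmod z * cmod (div_z h z + e * div_z g z)" using e(2) by simp
    also have "\<dots> \<le> cmod z * (\<beta> + (1 - \<beta>) * ((1 + cmod z) / (1 - cmod z)))"
      by (rule mult_left_mono[OF gr nz])
    also have "\<dots> = \<beta> * cmod z + (1 - \<beta>) * ((1 + cmod z) / (1 - cmod z)) * cmod z"
      by (simp only: distrib_left mult.commute mult.left_commute)
    finally show ?thesis .
  qed
  have lower: "\<beta> * cmod z + (1 - \<beta>) * ((1 - cmod z) / (1 + cmod z)) * cmod z \<le> cmod (h z + cnj (g z))"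
  proof -
    obtain e where e: "cmod e \<le> 1" "Re (e * div_z g z) = - cmod (div_z g z)"
      using align_minus by blast
    note P = class_phi[OF G e(1)]
    have gr: "\<beta> + (1 - \<beta>) * ((1 - cmod z) / (1 + cmod z)) \<le> Re (div_z h z + e * div_z g z)"
      by (rule growth(2)[OF P(1,2) P(3) \<beta> z])
    have "cmod z * (\<beta> + (1 - \<beta>) * ((1 - cmod z) / (1 + cmod z))) \<le> cmod z * Re (div_z h z + e * div_z g z)"
      by (rule mult_left_mono[OF gr nz])
    also have "\<dots> = cmod z * (Re (div_z h z) - cmod (div_z g z))" using e(2) by simp
    also have "\<dots> \<le> cmod z * (cmod (div_z h z) - cmod (div_z g z))"
      by (intro mult_left_mono nz) (simp add: complex_Re_le_cmod)
    also have "\<dots> = cmod (h z) - cmod (cnj (g z))"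
      unfolding hz gz by (simp only: norm_mult complex_mod_cnj right_diff_distrib)
    also have "\<dots> \<le> cmod (h z + cnj (g z))"
      using norm_diff_ineq[of "h z" "cnj (g z)"] by simp
    finally have "cmod z * (\<beta> + (1 - \<beta>) * ((1 - cmod z) / (1 + cmod z))) \<le> cmod (h z + cnj (g z))" .
    moreover have "cmod z * (\<beta> + (1 - \<beta>) * ((1 - cmod z) / (1 + cmod z))) = \<beta> * cmod z + (1 - \<beta>) * ((1 - cmod z) / (1 + cmod z)) * cmod z"
      by (simp only: distrib_left mult.commute mult.left_commute)
    ultimately show ?thesis by simp
  qed
  show ?thesis using upper lower by blast
qed

lemma re_frac:
  fixes z :: complex
  assumes "cmod z < 1"
  shows "- 1 / 2 < Re (z / (1 - z))"
proof -
  define x where "x = Re z"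
  define y where "y = Im z"
  have sq: "x ^ 2 + y ^ 2 < 1"
  proof -
    have "cmod z ^ 2 < 1" using assms by (simp add: power_less_one_iff)
    then show ?thesis unfolding x_def y_def by (simp add: cmod_power2)
  qed
  have x1: "x < 1" using abs_Re_le_cmod[of z] assms unfolding x_def by linarith
  have D: "0 < (1 - x) ^ 2 + y ^ 2" using x1 by (simp add: add_pos_nonneg)
  have "Re (z / (1 - z)) = (x * (1 - x) + y * (- y)) / ((1 - x) ^ 2 + y ^ 2)"
    unfolding x_def y_def by (simp add: Re_divide power2_eq_square)
  moreover have "- 1 / 2 < (x * (1 - x) + y * (- y)) / ((1 - x) ^ 2 + y ^ 2)"
    using D sq by (simp add: divide_simps) (simp add: power2_eq_square algebra_simps)
  ultimately show ?thesis by simp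
qed

lemma Re_ofr: "Re (complex_of_real a * w) = a * Re w" by simp

lemma h0_sum:
  fixes z c :: complex
  assumes "cmod z < 1"
  shows "(\<Sum>n. c * z ^ (n + 2)) = c * z ^ 2 / (1 - z)"
proof -
  have "(\<lambda>n. (c * z ^ 2) * z ^ n) sums ((c * z ^ 2) * (1 / (1 - z)))"
    by (rule sums_mult[OF geometric_sums[OF assms]])
  moreover have "(\<lambda>n. (c * z ^ 2) * z ^ n) = (\<lambda>n. c * z ^ (n + 2))"
    by (intro ext) (simp add: power_add mult_ac power2_eq_square)
  ultimately have "(\<lambda>n. c * z ^ (n + 2)) sums (c * z ^ 2 / (1 - z))" by simp
  then show ?thesis by (rule sums_unique[symmetric])
qed

lemma sharp:
  fixes \<beta> :: real
  assumes \<beta>: "0 \<le> \<beta>" "\<beta> < 1"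
  shows "G_tilde_H0 \<beta> (\<lambda>z::complex. z + (\<Sum>n. of_real (2 * (1 - \<beta>)) * z ^ (n + 2))) (\<lambda>z::complex. 0::complex) \<and>
          (\<forall>r::real. 0 \<le> r \<and> r < 1 \<longrightarrow>
             cmod ((\<lambda>z::complex. z + (\<Sum>n. of_real (2 * (1 - \<beta>)) * z ^ (n + 2))) (of_real r) + cnj ((\<lambda>z::complex. 0::complex) (of_real r))) = \<beta> * r + (1 - \<beta>) * ((1 + r) / (1 - r)) * r
           \<and> cmod ((\<lambda>z::complex. z + (\<Sum>n. of_real (2 * (1 - \<beta>)) * z ^ (n + 2))) (- of_real r) + cnj ((\<lambda>z::complex. 0::complex) (- of_real r))) = \<beta> * r + (1 - \<beta>) * ((1 - r) / (1 + r)) * r)"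
proof -
  define c :: complex where "c = of_real (2 * (1 - \<beta>))"
  define h0 where "h0 = (\<lambda>z::complex. z + (\<Sum>n. c * z ^ (n + 2)))"
  define g0 where "g0 = (\<lambda>z::complex. 0::complex)"
  define H where "H = (\<lambda>z::complex. z + c * z ^ 2 / (1 - z))"
  have hH: "h0 z = H z" if "z \<in> ball 0 1" for z
    using h0_sum[of z c] that unfolding h0_def H_def by simp
  have holH: "H holomorphic_on ball 0 1"
  proof -
    have "1 - z \<noteq> 0" if "z \<in> ball 0 1" for z :: complex using that by auto
    then show ?thesis unfolding H_def by (intro holomorphic_intros) auto
  qed
  have hol: "h0 holomorphic_on ball 0 1"
    by (rule holomorphic_transform[OF holH]) (simp add: hH)
  have h00: "h0 0 = 0" using hH[of 0] by (simp add: H_def)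
  have dH: "(H has_field_derivative 1) (at 0)"
    unfolding H_def by (auto intro!: derivative_eq_intros)
  have dh: "(h0 has_field_derivative 1) (at 0)"
    by (rule has_field_derivative_transform_within_open[OF dH open_ball[of 0 1]]) (auto simp: hH)
  have dh0: "deriv h0 0 = 1" by (rule DERIV_imp_deriv[OF dh])
  have inH: "in_H0 h0 g0" unfolding in_H0_def g0_def using hol h00 dh0 by simp
  have divg: "div_z g0 z = 0" for z unfolding div_z_def g0_def by simp
  have cond: "Re (div_z h0 z) - \<beta> > cmod (div_z g0 z)" if z: "z \<in> ball 0 1" for z
  proof (cases "z = 0")
    case True
    then show ?thesis using dh0 \<beta> by (simp add: div_z_def g0_def)
  next
    case False
    have "div_z h0 z = 1 + c * (z / (1 - z))"
      using False hH[OF z] unfolding div_z_def H_def by (simp add: field_simps power2_eq_square)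
    moreover have "Re (c * (z / (1 - z))) = 2 * (1 - \<beta>) * Re (z / (1 - z))"
      unfolding c_def by (rule Re_ofr)
    ultimately have "Re (div_z h0 z) = 1 + 2 * (1 - \<beta>) * Re (z / (1 - z))" by simp
    moreover have "- 1 / 2 < Re (z / (1 - z))" using z by (intro re_frac) simp
    then have "2 * (1 - \<beta>) * (- 1 / 2) < 2 * (1 - \<beta>) * Re (z / (1 - z))"
      using \<beta> by (intro mult_strict_left_mono) auto
    ultimately have "Re (div_z h0 z) > 1 + 2 * (1 - \<beta>) * (- 1 / 2)"
      by linarith
    then show ?thesis using divg by (simp add: field_simps)
  qed
  have G: "G_tilde_H0 \<beta> h0 g0" unfolding G_tilde_H0_def using inH cond by blast
  have vals: "cmod (h0 (of_real r) + cnj (g0 (of_real r))) = \<beta> * r + (1 - \<beta>) * ((1 + r) / (1 - r)) * r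
           \<and> cmod (h0 (- of_real r) + cnj (g0 (- of_real r))) = \<beta> * r + (1 - \<beta>) * ((1 - r) / (1 + r)) * r"
    if r: "0 \<le> r" "r < 1" for r
  proof
    have b1: "of_real r \<in> ball (0::complex) 1" "- of_real r \<in> ball (0::complex) 1" using r by auto
    have e1: "h0 (of_real r) = of_real (r + 2 * (1 - \<beta>) * r ^ 2 / (1 - r))"
      using hH[OF b1(1)] unfolding H_def c_def by simp
    have e2: "r + 2 * (1 - \<beta>) * r ^ 2 / (1 - r) = \<beta> * r + (1 - \<beta>) * ((1 + r) / (1 - r)) * r"
      using r by (simp add: field_simps power2_eq_square)
    have nn: "0 \<le> \<beta> * r + (1 - \<beta>) * ((1 + r) / (1 - r)) * r" using r \<beta> by simp
    have "cmod (h0 (of_real r) + cnj (g0 (of_real r))) = \<bar>r + 2 * (1 - \<beta>) * r ^ 2 / (1 - r)\<bar>"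
      unfolding g0_def e1 by (simp only: complex_cnj_zero add_0_right norm_of_real)
    then show "cmod (h0 (of_real r) + cnj (g0 (of_real r))) = \<beta> * r + (1 - \<beta>) * ((1 + r) / (1 - r)) * r"
      unfolding e2 using nn by simp
    have f1: "h0 (- of_real r) = of_real (- r + 2 * (1 - \<beta>) * r ^ 2 / (1 + r))"
      using hH[OF b1(2)] unfolding H_def c_def by simp
    have f2: "- r + 2 * (1 - \<beta>) * r ^ 2 / (1 + r) = - (\<beta> * r + (1 - \<beta>) * ((1 - r) / (1 + r)) * r)"
      using r by (simp add: field_simps power2_eq_square)
    have nn2: "0 \<le> \<beta> * r + (1 - \<beta>) * ((1 - r) / (1 + r)) * r" using r \<beta> by simp
    have "cmod (h0 (- of_real r) + cnj (g0 (- of_real r))) = \<bar>- r + 2 * (1 - \<beta>) * r ^ 2 / (1 + r)\<bar>"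
      unfolding g0_def f1 by (simp only: complex_cnj_zero add_0_right norm_of_real)
    then show "cmod (h0 (- of_real r) + cnj (g0 (- of_real r))) = \<beta> * r + (1 - \<beta>) * ((1 - r) / (1 + r)) * r"
      unfolding f2 using nn2 by simp
  qed
  show ?thesis using G vals unfolding h0_def g0_def c_def by simp
qed

theorem mainTheorem3:
  fixes \<beta> :: real and h g :: "complex \<Rightarrow> complex"
  assumes "0 \<le> \<beta>" and "\<beta> < 1"
    and "G_tilde_H0 \<beta> h g"
  shows "(\<forall>n\<ge>2. cmod (tcoeff h n) + cmod (tcoeff g n) \<le> 2 * (1 - \<beta>))
    \<and> (\<forall>z\<in>ball 0 1.
         \<beta> * cmod z + (1 - \<beta>) * ((1 - cmod z) / (1 + cmod z)) * cmod z \<le> cmod (h z + cnj (g z))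
       \<and> cmod (h z + cnj (g z)) \<le> \<beta> * cmod z + (1 - \<beta>) * ((1 + cmod z) / (1 - cmod z)) * cmod z)
    \<and> (let h0 = (\<lambda>z::complex. z + (\<Sum>n. of_real (2 * (1 - \<beta>)) * z ^ (n + 2)));
           g0 = (\<lambda>z::complex. 0::complex)
       in G_tilde_H0 \<beta> h0 g0 \<and>
          (\<forall>r::real. 0 \<le> r \<and> r < 1 \<longrightarrow>
             cmod (h0 (of_real r) + cnj (g0 (of_real r))) = \<beta> * r + (1 - \<beta>) * ((1 + r) / (1 - r)) * r
           \<and> cmod (h0 (- of_real r) + cnj (g0 (- of_real r))) = \<beta> * r + (1 - \<beta>) * ((1 - r) / (1 + r)) * r))"
proof -
  have A: "\<forall>n\<ge>2. cmod (tcoeff h n) + cmod (tcoeff g n) \<le> 2 * (1 - \<beta>)"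
    using part_coeff[OF assms(3)] by blast
  have B: "\<forall>z\<in>ball 0 1.
         \<beta> * cmod z + (1 - \<beta>) * ((1 - cmod z) / (1 + cmod z)) * cmod z \<le> cmod (h z + cnj (g z))
       \<and> cmod (h z + cnj (g z)) \<le> \<beta> * cmod z + (1 - \<beta>) * ((1 + cmod z) / (1 - cmod z)) * cmod z"
    using part_growth[OF assms(3) assms(1) assms(2)] by blast
  have C: "let h0 = (\<lambda>z::complex. z + (\<Sum>n. of_real (2 * (1 - \<beta>)) * z ^ (n + 2)));
           g0 = (\<lambda>z::complex. 0::complex)
       in G_tilde_H0 \<beta> h0 g0 \<and>
          (\<forall>r::real. 0 \<le> r \<and> r < 1 \<longrightarrow>
             cmod (h0 (of_real r) + cnj (g0 (of_real r))) = \<beta> * r + (1 - \<beta>) * ((1 + r) / (1 - r)) * r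
           \<and> cmod (h0 (- of_real r) + cnj (g0 (- of_real r))) = \<beta> * r + (1 - \<beta>) * ((1 - r) / (1 + r)) * r)"
    unfolding Let_def by (rule sharp[OF assms(1,2)])
  show ?thesis using A B C by blast
qed

end
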